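(* Let $X:=\{x_i\}_{i\in[n]}$ be any sequence in $\mathbb{R}^d$, let $k\ge 2$ and $s\ge k$ be integers, draw indices $\{i_j\}_{j\in[s]}$ uniformly from $[n]$ either independently with replacement, or without replacement (in which case $s\le n$), and put $Y:=\{x_{i_j}\}_{j\in[s]}$. Then \[\mathbb{E}\operatorname{SDP}(Y,k)\le \mathbb{E}\operatorname{IP}(Y,k)\le \operatorname{IP}(X,k).\]
   Context: For a tuple $Y=\{y_j\}_{j\in[m]}$ in $\mathbb{R}^d$ (repeated points allowed) and $m\ge k$: $\Pi(m,k)$ is the set of partitions of $[m]$ into $k$ nonempty sets; $c_S:=\frac1{|S|}\sum_{j\in S}y_j$; $\operatorname{IP}(Y,k):=\min_{\Gamma\in\Pi(m,k)}\frac1m\sum_{S\in\Gamma}\sum_{j\in S}\|y_j-c_S\|^2$ (the normalized $k$-means value). $D_Y\in\mathbb{R}^{m\times m}$ has entries $\|y_i-y_j\|^2$, and $\operatorname{SDP}(Y,k):=\min\{\frac1{2m}\operatorname{tr}(D_YZ): Z\in\mathbb{R}^{m\times m},\ Z\mathbf 1=\mathbf 1,\ \operatorname{tr}Z=k,\ Z\ge0\text{ entrywise},\ Z\succeq0\}$ (the normalized Peng–Wei relaxation value). *)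

theory Defs
  imports "HOL-Analysis.Analysis" "HOL-Probability.Probability"
begin

text \<open>A tuple Y of m points is a function nat => 'a, read on indices 0..<m.\<close>

definition centroid :: "(nat \<Rightarrow> 'a::euclidean_space) \<Rightarrow> nat set \<Rightarrow> 'a" where
  "centroid Y S = (1 / real (card S)) *\<^sub>R (\<Sum>j\<in>S. Y j)"

definition Partitions :: "nat \<Rightarrow> nat \<Rightarrow> nat set set set" where
  "Partitions m k = {\<Gamma>. partition_on {..<m} \<Gamma> \<and> card \<Gamma> = k}"

definition IP :: "nat \<Rightarrow> (nat \<Rightarrow> 'a::euclidean_space) \<Rightarrow> nat \<Rightarrow> real" where
  "IP m Y k = Min ((\<lambda>\<Gamma>. (1 / real m) * (\<Sum>S\<in>\<Gamma>. \<Sum>j\<in>S. (norm (Y j - centroid Y S))\<^sup>2))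
                   ` Partitions m k)"

definition distmat :: "(nat \<Rightarrow> 'a::euclidean_space) \<Rightarrow> nat \<Rightarrow> nat \<Rightarrow> real" where
  "distmat Y i j = (norm (Y i - Y j))\<^sup>2"

text \<open>Feasible set of the Peng--Wei relaxation (m x m real matrices as functions on indices < m);
  Z \<succeq> 0 means symmetric positive semidefinite.\<close>
definition SDP_feasible :: "nat \<Rightarrow> nat \<Rightarrow> (nat \<Rightarrow> nat \<Rightarrow> real) \<Rightarrow> bool" where
  "SDP_feasible m k Z \<longleftrightarrow>
     (\<forall>i<m. (\<Sum>j<m. Z i j) = 1) \<and>
     (\<Sum>i<m. Z i i) = real k \<and>
     (\<forall>i<m. \<forall>j<m. Z i j \<ge> 0) \<and>
     (\<forall>i<m. \<forall>j<m. Z i j = Z j i) \<and>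
     (\<forall>v :: nat \<Rightarrow> real. (\<Sum>i<m. \<Sum>j<m. v i * Z i j * v j) \<ge> 0)"

definition SDP :: "nat \<Rightarrow> (nat \<Rightarrow> 'a::euclidean_space) \<Rightarrow> nat \<Rightarrow> real" where
  "SDP m Y k = Inf {(1 / (2 * real m)) * (\<Sum>i<m. \<Sum>j<m. distmat Y i j * Z j i) | Z. SDP_feasible m k Z}"

definition samples_wr :: "nat \<Rightarrow> nat \<Rightarrow> (nat \<Rightarrow> nat) set" where
  "samples_wr n s = PiE {..<s} (\<lambda>_. {..<n})"

definition samples_wor :: "nat \<Rightarrow> nat \<Rightarrow> (nat \<Rightarrow> nat) set" where
  "samples_wor n s = {i \<in> samples_wr n s. inj_on i {..<s}}"

end

theory Submission
  imports Defs
begin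


lemma sum_centered:
  fixes Y :: "nat \<Rightarrow> 'a::euclidean_space"
  assumes "finite T"
  shows "(\<Sum>j\<in>T. Y j - centroid Y T) = 0"
proof (cases "T = {}")
  case False
  then have "card T > 0" using assms by auto
  then show ?thesis
    by (simp add: sum_subtractf centroid_def scaleR_sum_right[symmetric] sum_constant_scaleR)
qed simp

lemma centroid_opt:
  fixes Y :: "nat \<Rightarrow> 'a::euclidean_space"
  assumes "finite T"
  shows "(\<Sum>j\<in>T. (norm (Y j - centroid Y T))\<^sup>2) \<le> (\<Sum>j\<in>T. (norm (Y j - c))\<^sup>2)"
proof -
  let ?\<mu> = "centroid Y T"
  have eq: "(norm (Y j - c))\<^sup>2 = (norm (Y j - ?\<mu>))\<^sup>2 + 2 * ((Y j - ?\<mu>) \<bullet> (?\<mu> - c)) + (norm (?\<mu> - c))\<^sup>2" for j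
  proof -
    have ab: "(norm (a+b))\<^sup>2 = (norm a)\<^sup>2 + 2*(a\<bullet>b) + (norm b)\<^sup>2" for a b :: 'a
      by (simp add: power2_norm_eq_inner inner_add_left inner_add_right inner_commute)
    have "Y j - c = (Y j - ?\<mu>) + (?\<mu> - c)" by simp
    then show ?thesis using ab[of "Y j - ?\<mu>" "?\<mu> - c"] by metis
  qed
  have "(\<Sum>j\<in>T. (Y j - ?\<mu>) \<bullet> (?\<mu> - c)) = (\<Sum>j\<in>T. Y j - ?\<mu>) \<bullet> (?\<mu> - c)"
    by (simp add: inner_sum_left)
  also have "\<dots> = 0" using sum_centered[where Y=Y, OF assms] by simp
  finally have z: "(\<Sum>j\<in>T. (Y j - ?\<mu>) \<bullet> (?\<mu> - c)) = 0" .
  have "(\<Sum>j\<in>T. (norm (Y j - c))\<^sup>2) = (\<Sum>j\<in>T. (norm (Y j - ?\<mu>))\<^sup>2) + 2 * (\<Sum>j\<in>T. (Y j - ?\<mu>) \<bullet> (?\<mu> - c)) + (\<Sum>j\<in>T. (norm (?\<mu> - c))\<^sup>2)"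
    by (simp add: eq sum.distrib sum_distrib_left)
  then show ?thesis using z by (simp add: sum_nonneg)
qed

lemma pair_identity:
  fixes Y :: "nat \<Rightarrow> 'a::euclidean_space"
  assumes "finite T"
  shows "(\<Sum>i\<in>T. \<Sum>j\<in>T. (norm (Y i - Y j))\<^sup>2) = 2 * real (card T) * (\<Sum>j\<in>T. (norm (Y j - centroid Y T))\<^sup>2)"
proof -
  define z where "z j = Y j - centroid Y T" for j
  have Z: "(\<Sum>j\<in>T. z j) = 0" using sum_centered[OF assms] by (simp add: z_def)
  have "Y i - Y j = z i - z j" for i j by (simp add: z_def)
  then have e: "(norm (Y i - Y j))\<^sup>2 = (norm (z i))\<^sup>2 + (norm (z j))\<^sup>2 - 2 * (z i \<bullet> z j)" for i j
    by (simp add: power2_norm_eq_inner inner_diff_left inner_diff_right inner_commute)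
  have "(\<Sum>i\<in>T. \<Sum>j\<in>T. z i \<bullet> z j) = (\<Sum>i\<in>T. z i) \<bullet> (\<Sum>j\<in>T. z j)"
    by (simp add: inner_sum_left inner_sum_right sum.swap[of "\<lambda>i j. z i \<bullet> z j"])
  also have "\<dots> = 0" using Z by simp
  finally have zz: "(\<Sum>i\<in>T. \<Sum>j\<in>T. z i \<bullet> z j) = 0" .
  have "(\<Sum>i\<in>T. \<Sum>j\<in>T. (norm (Y i - Y j))\<^sup>2) = (\<Sum>i\<in>T. \<Sum>j\<in>T. (norm (z i))\<^sup>2 + (norm (z j))\<^sup>2) - 2 * (\<Sum>i\<in>T. \<Sum>j\<in>T. z i \<bullet> z j)"
    by (simp add: e sum_subtractf sum_distrib_left)
  also have "\<dots> = 2 * real (card T) * (\<Sum>j\<in>T. (norm (z j))\<^sup>2)"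
    using zz by (simp add: sum.distrib sum_distrib_left[symmetric] sum.swap[of "\<lambda>i j. (norm (z j))\<^sup>2"] algebra_simps)
  finally show ?thesis by (simp add: z_def)
qed

definition cst :: "(nat \<Rightarrow> 'a::euclidean_space) \<Rightarrow> nat set set \<Rightarrow> real" where
  "cst Y P = (\<Sum>S\<in>P. \<Sum>j\<in>S. (norm (Y j - centroid Y S))\<^sup>2)"

lemma part_unique:
  assumes "partition_on A P" "p \<in> P" "q \<in> P" "y \<in> p" "y \<in> q"
  shows "p = q"
  using assms unfolding partition_on_def disjoint_def disjnt_def by blast

lemma part_finite:
  assumes "partition_on {..<m::nat} P"
  shows "finite P" "S \<in> P \<Longrightarrow> finite S" "S \<in> P \<Longrightarrow> S \<subseteq> {..<m}" "S \<in> P \<Longrightarrow> S \<noteq> {}"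
proof -
  have sub: "P \<subseteq> Pow {..<m}" using partition_onD1[OF assms] by auto
  show "finite P" using finite_subset[OF sub] by simp
  show "S \<in> P \<Longrightarrow> finite S" "S \<in> P \<Longrightarrow> S \<subseteq> {..<m}" using sub finite_subset by auto
  show "S \<in> P \<Longrightarrow> S \<noteq> {}" using partition_onD3[OF assms] by auto
qed

lemma finite_Partitions: "finite (Partitions m k)"
proof -
  have "Partitions m k \<subseteq> Pow (Pow {..<m})"
    unfolding Partitions_def using part_finite(3) by blast
  then show ?thesis by (rule finite_subset) auto
qed

lemma refine:
  fixes Y :: "nat \<Rightarrow> 'a::euclidean_space"
  assumes "partition_on {..<m} P" "card P \<le> k" "k \<le> m"
  shows "\<exists>Q. partition_on {..<m} Q \<and> card Q = k \<and> cst Y Q \<le> cst Y P"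
  using assms
proof (induction "k - card P" arbitrary: P)
  case 0
  then show ?case by (intro exI[of _ P]) auto
next
  case (Suc d)
  note part = Suc.prems(1)
  have finP: "finite P" using part_finite(1)[OF part] .
  have lt: "card P < k" using Suc.hyps(2) by linarith
  have "\<exists>S\<in>P. 2 \<le> card S"
  proof (rule ccontr)
    assume "\<not> ?thesis"
    then have le1: "\<And>S. S \<in> P \<Longrightarrow> card S \<le> 1" by auto
    have "m = card (\<Union>P)" using partition_onD1[OF part] by (metis card_lessThan)
    also have "\<dots> = sum card P"
      by (rule card_Union_disjoint) (use partition_onD2[OF part] part_finite(2)[OF part] in \<open>auto simp: disjoint_def\<close>)
    also have "\<dots> \<le> sum (\<lambda>_. 1) P" by (rule sum_mono) (rule le1)
    also have "\<dots> = card P" by simp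
    finally show False using lt Suc.prems(3) by linarith
  qed
  then obtain S where S: "S \<in> P" "2 \<le> card S" by blast
  then have finS: "finite S" using part_finite(2)[OF part] by auto
  then obtain x where x: "x \<in> S" using S by (metis card.empty not_numeral_le_zero ex_in_conv)
  have "card (S - {x}) \<ge> 1" using S finS x by auto
  then obtain y where "y \<in> S - {x}" by (metis card.empty ex_in_conv not_one_le_zero)
  then have y: "y \<in> S" "y \<noteq> x" by auto
  define P' where "P' = insert {x} (insert (S - {x}) (P - {S}))"
  have n1: "S - {x} \<notin> P - {S}"
  proof
    assume "S - {x} \<in> P - {S}"
    then show False using part_unique[OF part S(1), of "S - {x}" y] y by auto
  qed
  have n2: "{x} \<notin> insert (S - {x}) (P - {S})"
  proof
    assume "{x} \<in> insert (S - {x}) (P - {S})"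
    then show False using part_unique[OF part S(1), of "{x}" x] x S(2) by auto
  qed
  have cardP': "card P' = Suc (card P)"
    unfolding P'_def using n1 n2 finP S(1) by (simp add: card.insert_remove)
     (metis One_nat_def Suc_pred card_gt_0_iff empty_iff)
  have partP': "partition_on {..<m} P'"
  proof (rule partition_onI)
    show "\<Union>P' = {..<m}" unfolding P'_def using partition_onD1[OF part] S(1) x by blast
    show "{} \<notin> P'" unfolding P'_def using partition_onD3[OF part] y by auto
    fix p q assume pq: "p \<in> P'" "q \<in> P'" "p \<noteq> q"
    have D: "disjnt p q" if "p \<in> P" "q \<in> P" "p \<noteq> q" for p q
      using part_unique[OF part that(1,2)] that(3) unfolding disjnt_def by blast
    have DS: "disjnt S q" if "q \<in> P - {S}" for q using D[of S q] S(1) that by auto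
    show "disjnt p q"
    proof -
      consider "p = {x}" | "p = S - {x}" | "p \<in> P - {S}" using pq(1) unfolding P'_def by blast
      then show ?thesis
      proof cases
        case 1
        then consider "q = S - {x}" | "q \<in> P - {S}" using pq unfolding P'_def by blast
        then show ?thesis
        proof cases
          case 1 then show ?thesis using \<open>p = {x}\<close> by (simp add: disjnt_def)
        next
          case 2 then show ?thesis using \<open>p = {x}\<close> DS[of q] x by (auto simp: disjnt_def)
        qed
      next
        case 2
        then consider "q = {x}" | "q \<in> P - {S}" using pq unfolding P'_def by blast
        then show ?thesis
        proof cases
          case 1 then show ?thesis using \<open>p = S - {x}\<close> by (simp add: disjnt_def)
        next
          case 2 then show ?thesis using \<open>p = S - {x}\<close> DS[of q] by (auto simp: disjnt_def)
        qed
      next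
        case 3
        then consider "q = {x}" | "q = S - {x}" | "q \<in> P - {S}" using pq unfolding P'_def by blast
        then show ?thesis
        proof cases
          case 1 then show ?thesis using 3 DS[of p] x by (auto simp: disjnt_def)
        next
          case 2 then show ?thesis using 3 DS[of p] by (auto simp: disjnt_def)
        next
          case 4: 3 then show ?thesis using 3 D pq(3) by auto
        qed
      qed
    qed
  qed
  have cP': "cst Y P' = (\<Sum>j\<in>{x}. (norm (Y j - centroid Y {x}))\<^sup>2) + (\<Sum>j\<in>S-{x}. (norm (Y j - centroid Y (S - {x})))\<^sup>2) + cst Y (P - {S})"
    unfolding P'_def cst_def using n1 n2 finP by (simp add: sum.insert)
  have cx: "(\<Sum>j\<in>{x}. (norm (Y j - centroid Y {x}))\<^sup>2) = 0" by (simp add: centroid_def)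
  have cP: "cst Y P = (\<Sum>j\<in>S. (norm (Y j - centroid Y S))\<^sup>2) + cst Y (P - {S})"
    unfolding cst_def using finP S(1) by (simp add: sum.remove)
  have "(\<Sum>j\<in>S-{x}. (norm (Y j - centroid Y (S - {x})))\<^sup>2) \<le> (\<Sum>j\<in>S-{x}. (norm (Y j - centroid Y S))\<^sup>2)"
    by (rule centroid_opt) (use finS in auto)
  also have "\<dots> \<le> (\<Sum>j\<in>S. (norm (Y j - centroid Y S))\<^sup>2)"
    using finS x by (simp add: sum.remove)
  finally have "cst Y P' \<le> cst Y P" using cP' cx cP by simp
  moreover have "d = k - card P'" using Suc.hyps(2) cardP' by simp
  then obtain Q where "partition_on {..<m} Q \<and> card Q = k \<and> cst Y Q \<le> cst Y P'"
    using Suc.hyps(1)[of P'] partP' cardP' lt Suc.prems(3) by auto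
  ultimately show ?case by (intro exI[of _ Q]) auto
qed

lemma label_part:
  fixes lab :: "nat \<Rightarrow> 'b" and m :: nat and Y :: "nat \<Rightarrow> 'a::euclidean_space"
  defines "P \<equiv> (\<lambda>l. {j\<in>{..<m}. lab j = l}) ` (lab ` {..<m})"
  shows "partition_on {..<m} P" "card P \<le> card (lab ` {..<m})"
    "cst Y P \<le> (\<Sum>j<m. (norm (Y j - c (lab j)))\<^sup>2)"
proof -
  let ?F = "\<lambda>l. {j\<in>{..<m}. lab j = l}"
  let ?L = "lab ` {..<m}"
  show "partition_on {..<m} P"
  proof (rule partition_onI)
    show "\<Union>P = {..<m}" unfolding P_def by auto
    show "{} \<notin> P" unfolding P_def by auto
    fix p q assume "p \<in> P" "q \<in> P" "p \<noteq> q"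
    then show "disjnt p q" unfolding P_def disjnt_def by auto
  qed
  show "card P \<le> card ?L" unfolding P_def by (rule card_image_le) simp
  have inj: "inj_on ?F ?L"
  proof (rule inj_onI)
    fix a b assume "a \<in> ?L" "b \<in> ?L" "?F a = ?F b"
    then obtain j where "j < m" "lab j = a" by auto
    then have "j \<in> ?F a" by simp
    then have "j \<in> ?F b" using \<open>?F a = ?F b\<close> by blast
    then show "a = b" using \<open>lab j = a\<close> by blast
  qed
  have "cst Y P = (\<Sum>l\<in>?L. \<Sum>j\<in>?F l. (norm (Y j - centroid Y (?F l)))\<^sup>2)"
    unfolding cst_def P_def by (subst sum.reindex[OF inj]) simp
  also have "\<dots> \<le> (\<Sum>l\<in>?L. \<Sum>j\<in>?F l. (norm (Y j - c l))\<^sup>2)"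
    by (rule sum_mono) (rule centroid_opt, simp)
  also have "\<dots> = (\<Sum>l\<in>?L. \<Sum>j\<in>?F l. (norm (Y j - c (lab j)))\<^sup>2)"
    by (rule sum.cong) auto
  also have "\<dots> = (\<Sum>j<m. (norm (Y j - c (lab j)))\<^sup>2)"
    by (rule sum.group) auto
  finally show "cst Y P \<le> (\<Sum>j<m. (norm (Y j - c (lab j)))\<^sup>2)" .
qed

lemma IP_eq: "IP m Y k = Min ((\<lambda>\<Gamma>. (1 / real m) * cst Y \<Gamma>) ` Partitions m k)"
  unfolding IP_def cst_def ..

lemma IP_le_label:
  fixes lab :: "nat \<Rightarrow> 'b" and Y :: "nat \<Rightarrow> 'a::euclidean_space"
  assumes "card (lab ` {..<m}) \<le> k" "k \<le> m"
  shows "IP m Y k \<le> (1 / real m) * (\<Sum>j<m. (norm (Y j - c (lab j)))\<^sup>2)"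
proof -
  define P where "P = (\<lambda>l. {j\<in>{..<m}. lab j = l}) ` (lab ` {..<m})"
  note L = label_part[where lab=lab and m=m, folded P_def]
  obtain Q where Q: "partition_on {..<m} Q" "card Q = k" "cst Y Q \<le> cst Y P"
    using refine[OF L(1) order_trans[OF L(2) assms(1)] assms(2), of Y] by blast
  have "Q \<in> Partitions m k" using Q by (simp add: Partitions_def)
  then have "IP m Y k \<le> (1 / real m) * cst Y Q"
    unfolding IP_eq by (intro Min_le finite_imageI finite_Partitions) auto
  also have "\<dots> \<le> (1 / real m) * cst Y P" using Q(3) by (intro mult_left_mono) auto
  also have "\<dots> \<le> (1 / real m) * (\<Sum>j<m. (norm (Y j - c (lab j)))\<^sup>2)"
    using L(3)[of Y c] by (intro mult_left_mono) auto
  finally show ?thesis .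
qed

lemma Partitions_nonempty:
  assumes "1 \<le> k" "k \<le> m"
  shows "Partitions m k \<noteq> {}"
proof -
  have "partition_on {..<m} {{..<m}}" using assms by (intro partition_on_space) (simp add: lessThan_empty_iff)
  then obtain Q where "partition_on {..<m} Q" "card Q = k"
    using refine[of m "{{..<m}}" k "\<lambda>_. 0::real"] assms by auto
  then show ?thesis unfolding Partitions_def by auto
qed

lemma IP_attained:
  assumes "1 \<le> k" "k \<le> m"
  obtains \<Gamma> where "\<Gamma> \<in> Partitions m k" "IP m Y k = (1 / real m) * cst Y \<Gamma>"
proof -
  have "IP m Y k \<in> (\<lambda>\<Gamma>. (1 / real m) * cst Y \<Gamma>) ` Partitions m k"
    unfolding IP_eq using Partitions_nonempty[OF assms] finite_Partitions
    by (intro Min_in finite_imageI) auto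
  then show ?thesis using that by auto
qed



lemma SDP_le_IP:
  fixes Y :: "nat \<Rightarrow> 'a::euclidean_space"
  assumes "1 \<le> k" "k \<le> m"
  shows "SDP m Y k \<le> IP m Y k"
proof -
  obtain \<Gamma> where G: "\<Gamma> \<in> Partitions m k" and IPe: "IP m Y k = (1 / real m) * cst Y \<Gamma>"
    using IP_attained[OF assms] by blast
  have part: "partition_on {..<m} \<Gamma>" and cardG: "card \<Gamma> = k" using G by (auto simp: Partitions_def)
  note pf = part_finite[OF part]
  define blk where "blk i = (THE S. S \<in> \<Gamma> \<and> i \<in> S)" for i
  have blk_eq: "blk i = S" if "S \<in> \<Gamma>" "i \<in> S" for i S
    unfolding blk_def by (rule the_equality) (use that part_unique[OF part] in blast)+
  have blk_in: "blk i \<in> \<Gamma> \<and> i \<in> blk i" if "i < m" for i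
  proof -
    from that obtain S where "S \<in> \<Gamma>" "i \<in> S" using partition_onD1[OF part] by auto
    then show ?thesis using blk_eq by auto
  qed
  have fib: "{j\<in>{..<m}. blk j = S} = S" if "S \<in> \<Gamma>" for S
  proof
    show "{j\<in>{..<m}. blk j = S} \<subseteq> S" using blk_in by auto
    show "S \<subseteq> {j\<in>{..<m}. blk j = S}" using blk_eq[OF that] pf(3)[OF that] by auto
  qed
  have regroup: "(\<Sum>i<m. h i) = (\<Sum>S\<in>\<Gamma>. \<Sum>i\<in>S. h i)" for h :: "nat \<Rightarrow> real"
  proof -
    have "(\<Sum>i<m. h i) = (\<Sum>S\<in>\<Gamma>. \<Sum>i\<in>{j\<in>{..<m}. blk j = S}. h i)"
      by (rule sum.group[symmetric]) (use pf(1) blk_in in auto)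
    also have "\<dots> = (\<Sum>S\<in>\<Gamma>. \<Sum>i\<in>S. h i)" using fib by simp
    finally show ?thesis .
  qed
  have rowsum: "(\<Sum>j<m. if blk i = blk j then h j else 0) = (\<Sum>j\<in>blk i. h j)" if "i < m" for i and h :: "nat \<Rightarrow> real"
  proof -
    have "(\<Sum>j<m. if blk i = blk j then h j else 0) = (\<Sum>j\<in>{j\<in>{..<m}. blk j = blk i}. h j)"
      by (subst sum.inter_filter) (auto intro: sum.cong)
    also have "\<dots> = (\<Sum>j\<in>blk i. h j)" using fib blk_in[OF that] by simp
    finally show ?thesis .
  qed
  have cardpos: "real (card S) > 0" if "S \<in> \<Gamma>" for S
    using pf(2,4)[OF that] by (simp add: card_gt_0_iff)
  define Z where "Z i j = (if blk i = blk j then 1 / real (card (blk i)) else 0)" for i j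
  have feas: "SDP_feasible m k Z"
    unfolding SDP_feasible_def
  proof (intro conjI allI impI)
    fix i assume i: "i < m"
    show "(\<Sum>j<m. Z i j) = 1"
      unfolding Z_def using rowsum[OF i, of "\<lambda>_. 1 / real (card (blk i))"] cardpos blk_in[OF i]
      by (simp add: field_simps)
  next
    have "(\<Sum>i<m. Z i i) = (\<Sum>S\<in>\<Gamma>. \<Sum>i\<in>S. 1 / real (card (blk i)))"
      unfolding Z_def by (simp add: regroup)
    also have "\<dots> = (\<Sum>S\<in>\<Gamma>. \<Sum>i\<in>S. 1 / real (card S))"
      by (intro sum.cong refl) (metis blk_eq)
    also have "\<dots> = (\<Sum>S\<in>\<Gamma>. 1)"
      by (intro sum.cong refl) (use cardpos in simp)
    finally show "(\<Sum>i<m. Z i i) = real k" using cardG by simp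
  next
    fix i j show "0 \<le> Z i j" by (simp add: Z_def)
  next
    fix i j show "Z i j = Z j i" by (simp add: Z_def)
  next
    fix v :: "nat \<Rightarrow> real"
    have "(\<Sum>j<m. v i * Z i j * v j) = (\<Sum>j\<in>blk i. v i * v j / real (card (blk i)))" if "i < m" for i
    proof -
      have "(\<Sum>j<m. v i * Z i j * v j) = (\<Sum>j<m. if blk i = blk j then v i * v j / real (card (blk i)) else 0)"
        unfolding Z_def by (rule sum.cong) auto
      then show ?thesis using rowsum[OF that, of "\<lambda>j. v i * v j / real (card (blk i))"] by simp
    qed
    note X = this
    have "(\<Sum>i<m. \<Sum>j<m. v i * Z i j * v j) = (\<Sum>i<m. \<Sum>j\<in>blk i. v i * v j / real (card (blk i)))"
      by (rule sum.cong[OF refl]) (rule X, simp)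
    also have "\<dots> = (\<Sum>S\<in>\<Gamma>. \<Sum>i\<in>S. \<Sum>j\<in>S. v i * v j / real (card S))"
      by (subst regroup) (intro sum.cong refl; metis blk_eq)
    also have "\<dots> = (\<Sum>S\<in>\<Gamma>. (\<Sum>i\<in>S. v i)\<^sup>2 / real (card S))"
      by (intro sum.cong refl) (simp add: power2_eq_square sum_product sum_divide_distrib)
    also have "\<dots> \<ge> 0" by (intro sum_nonneg) simp
    finally show "(\<Sum>i<m. \<Sum>j<m. v i * Z i j * v j) \<ge> 0" .
  qed
  have val: "(\<Sum>i<m. \<Sum>j<m. distmat Y i j * Z j i) = 2 * cst Y \<Gamma>"
  proof -
    have "(\<Sum>j<m. distmat Y i j * Z j i) = (\<Sum>j\<in>blk i. distmat Y i j / real (card (blk i)))" if "i < m" for i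
    proof -
      have "(\<Sum>j<m. distmat Y i j * Z j i) = (\<Sum>j<m. if blk i = blk j then distmat Y i j / real (card (blk i)) else 0)"
        unfolding Z_def by (rule sum.cong) auto
      then show ?thesis using rowsum[OF that, of "\<lambda>j. distmat Y i j / real (card (blk i))"] by simp
    qed
    note X = this
    have "(\<Sum>i<m. \<Sum>j<m. distmat Y i j * Z j i) = (\<Sum>i<m. \<Sum>j\<in>blk i. distmat Y i j / real (card (blk i)))"
      by (rule sum.cong[OF refl]) (rule X, simp)
    also have "\<dots> = (\<Sum>S\<in>\<Gamma>. \<Sum>i\<in>S. \<Sum>j\<in>S. distmat Y i j / real (card S))"
      by (subst regroup) (intro sum.cong refl; metis blk_eq)
    also have "\<dots> = (\<Sum>S\<in>\<Gamma>. (\<Sum>i\<in>S. \<Sum>j\<in>S. (norm (Y i - Y j))\<^sup>2) / real (card S))"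
      by (simp add: distmat_def sum_divide_distrib)
    also have "\<dots> = (\<Sum>S\<in>\<Gamma>. 2 * (\<Sum>j\<in>S. (norm (Y j - centroid Y S))\<^sup>2))"
      by (intro sum.cong refl) (use cardpos pf(2) in \<open>simp add: pair_identity\<close>)
    finally show ?thesis by (simp add: cst_def sum_distrib_left)
  qed
  have "SDP m Y k \<le> (1 / (2 * real m)) * (\<Sum>i<m. \<Sum>j<m. distmat Y i j * Z j i)"
    unfolding SDP_def
  proof (rule cInf_lower)
    show "(1 / (2 * real m)) * (\<Sum>i<m. \<Sum>j<m. distmat Y i j * Z j i) \<in> {(1 / (2 * real m)) * (\<Sum>i<m. \<Sum>j<m. distmat Y i j * Z j i) | Z. SDP_feasible m k Z}"
      using feas by blast
    show "bdd_below {(1 / (2 * real m)) * (\<Sum>i<m. \<Sum>j<m. distmat Y i j * Z j i) | Z. SDP_feasible m k Z}"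
    proof (rule bdd_belowI[of _ 0])
      fix x assume "x \<in> {(1 / (2 * real m)) * (\<Sum>i<m. \<Sum>j<m. distmat Y i j * Z j i) | Z. SDP_feasible m k Z}"
      then obtain Z' where "SDP_feasible m k Z'" and x: "x = (1 / (2 * real m)) * (\<Sum>i<m. \<Sum>j<m. distmat Y i j * Z' j i)" by blast
      then have "\<forall>i<m. \<forall>j<m. Z' j i \<ge> 0" unfolding SDP_feasible_def by blast
      then show "0 \<le> x" unfolding x distmat_def by (intro mult_nonneg_nonneg sum_nonneg) auto
    qed
  qed
  also have "\<dots> = IP m Y k" using IPe val by simp
  finally show ?thesis .
qed



definition sw :: "nat \<Rightarrow> nat \<Rightarrow> nat \<Rightarrow> nat" where
  "sw a b x = (if x = a then b else if x = b then a else x)"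

definition Tsw :: "nat \<Rightarrow> nat \<Rightarrow> nat \<Rightarrow> (nat \<Rightarrow> nat) \<Rightarrow> (nat \<Rightarrow> nat)" where
  "Tsw s a b i = (\<lambda>x. if x < s then sw a b (i x) else i x)"

lemma sw_sw[simp]: "sw a b (sw a b x) = x" by (simp add: sw_def)
lemma Tsw_Tsw[simp]: "Tsw s a b (Tsw s a b i) = i" by (simp add: Tsw_def fun_eq_iff)
lemma inj_sw: "inj (sw a b)" by (metis injI sw_sw)

lemma Tsw_wr: "i \<in> samples_wr n s \<Longrightarrow> a < n \<Longrightarrow> b < n \<Longrightarrow> Tsw s a b i \<in> samples_wr n s"
  unfolding samples_wr_def Tsw_def PiE_iff extensional_def
  by (intro conjI ballI allI impI) (auto simp: sw_def)

lemma Tsw_wor: "i \<in> samples_wor n s \<Longrightarrow> a < n \<Longrightarrow> b < n \<Longrightarrow> Tsw s a b i \<in> samples_wor n s"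
proof -
  assume i: "i \<in> samples_wor n s" and ab: "a < n" "b < n"
  then have "Tsw s a b i \<in> samples_wr n s" using Tsw_wr by (auto simp: samples_wor_def)
  moreover have "inj_on (Tsw s a b i) {..<s}"
  proof -
    have "inj_on (sw a b \<circ> i) {..<s}"
      using i inj_sw by (auto simp: samples_wor_def intro: comp_inj_on inj_on_subset)
    then show ?thesis unfolding inj_on_def Tsw_def by auto
  qed
  ultimately show ?thesis by (simp add: samples_wor_def)
qed

lemma fiber_le:
  assumes fin: "finite A" and cl: "\<And>i. i \<in> A \<Longrightarrow> Tsw s a b i \<in> A" and j: "j < s"
  shows "card {i\<in>A. i j = a} \<le> card {i\<in>A. i j = b}"
proof -
  have inj: "inj_on (Tsw s a b) {i\<in>A. i j = a}" by (rule inj_onI) (metis Tsw_Tsw)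
  have "Tsw s a b ` {i\<in>A. i j = a} \<subseteq> {i\<in>A. i j = b}"
    using cl j by (auto simp: Tsw_def sw_def)
  then have "card (Tsw s a b ` {i\<in>A. i j = a}) \<le> card {i\<in>A. i j = b}"
    by (rule card_mono[rotated]) (use fin in simp)
  then show ?thesis using card_image[OF inj] by simp
qed

lemma avg:
  fixes f :: "nat \<Rightarrow> real"
  assumes fin: "finite A" and ne: "A \<noteq> {}" and sub: "A \<subseteq> samples_wr n s"
    and cl: "\<And>i a b. i \<in> A \<Longrightarrow> a < n \<Longrightarrow> b < n \<Longrightarrow> Tsw s a b i \<in> A" and j: "j < s"
  shows "(\<Sum>i\<in>A. f (i j)) / real (card A) = (\<Sum>a<n. f a) / real n"
proof -
  have rng: "i j < n" if "i \<in> A" for i using sub that j by (auto simp: samples_wr_def PiE_iff)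
  obtain i0 where "i0 \<in> A" using ne by auto
  then have n0: "0 < n" using rng by fastforce
  define c where "c = card {i\<in>A. i j = 0}"
  have cc: "card {i\<in>A. i j = a} = c" if "a < n" for a
  proof -
    have "card {i\<in>A. i j = a} \<le> card {i\<in>A. i j = 0}"
      by (rule fiber_le[OF fin _ j]) (rule cl, use that n0 in auto)
    moreover have "card {i\<in>A. i j = 0} \<le> card {i\<in>A. i j = a}"
      by (rule fiber_le[OF fin _ j]) (rule cl, use that n0 in auto)
    ultimately show ?thesis unfolding c_def by simp
  qed
  have "(\<Sum>i\<in>A. f (i j)) = (\<Sum>a<n. \<Sum>i\<in>{i\<in>A. i j = a}. f (i j))"
    by (rule sum.group[symmetric]) (use fin rng in auto)
  also have "\<dots> = (\<Sum>a<n. real c * f a)"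
    by (rule sum.cong[OF refl]) (simp add: cc)
  finally have S1: "(\<Sum>i\<in>A. f (i j)) = real c * (\<Sum>a<n. f a)" by (simp add: sum_distrib_left)
  have "card A = (\<Sum>a<n. card {i\<in>A. i j = a})"
    using sum.group[OF fin, of "{..<n}" "\<lambda>i. i j" "\<lambda>_. 1::nat"] rng by fastforce
  also have "\<dots> = n * c" by (simp add: cc)
  finally have C: "card A = n * c" .
  have "c > 0" using C ne fin by (metis card_0_eq mult_0_right gr0I)
  then show ?thesis using S1 C n0 by (simp add: field_simps)
qed

lemma expect_avg:
  fixes f :: "nat \<Rightarrow> real"
  assumes fin: "finite A" and ne: "A \<noteq> {}" and sub: "A \<subseteq> samples_wr n s"
    and cl: "\<And>i a b. i \<in> A \<Longrightarrow> a < n \<Longrightarrow> b < n \<Longrightarrow> Tsw s a b i \<in> A" and s: "0 < s"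
  shows "measure_pmf.expectation (pmf_of_set A) (\<lambda>i. (1 / real s) * (\<Sum>j<s. f (i j))) = (\<Sum>a<n. f a) / real n"
proof -
  have "measure_pmf.expectation (pmf_of_set A) (\<lambda>i. (1 / real s) * (\<Sum>j<s. f (i j)))
      = (\<Sum>i\<in>A. (1 / real s) * (\<Sum>j<s. f (i j))) / real (card A)"
    by (rule integral_pmf_of_set[OF ne fin])
  also have "\<dots> = (1 / real s) * (\<Sum>j<s. (\<Sum>i\<in>A. f (i j)) / real (card A))"
    by (simp add: sum_distrib_left sum_divide_distrib sum.swap[of _ "{..<s}"])
  also have "\<dots> = (1 / real s) * (\<Sum>j<s. (\<Sum>a<n. f a) / real n)"
    using avg[OF fin ne sub cl] by simp
  also have "\<dots> = (\<Sum>a<n. f a) / real n" using s by simp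
  finally show ?thesis .
qed



lemma main_generic:
  fixes X :: "nat \<Rightarrow> 'a::euclidean_space"
  assumes fin: "finite A" and ne: "A \<noteq> {}" and sub: "A \<subseteq> samples_wr n s"
    and cl: "\<And>i a b. i \<in> A \<Longrightarrow> a < n \<Longrightarrow> b < n \<Longrightarrow> Tsw s a b i \<in> A"
    and k: "1 \<le> k" "k \<le> s" "k \<le> n"
  shows "measure_pmf.expectation (pmf_of_set A) (\<lambda>i. SDP s (X \<circ> i) k)
            \<le> measure_pmf.expectation (pmf_of_set A) (\<lambda>i. IP s (X \<circ> i) k)
          \<and> measure_pmf.expectation (pmf_of_set A) (\<lambda>i. IP s (X \<circ> i) k)
            \<le> IP n X k"
proof
  have cA: "real (card A) > 0" using fin ne by (simp add: card_gt_0_iff)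
  show "measure_pmf.expectation (pmf_of_set A) (\<lambda>i. SDP s (X \<circ> i) k)
            \<le> measure_pmf.expectation (pmf_of_set A) (\<lambda>i. IP s (X \<circ> i) k)"
    unfolding integral_pmf_of_set[OF ne fin]
    by (intro divide_right_mono sum_mono SDP_le_IP k) (use cA in auto)
  obtain \<Gamma> where G: "\<Gamma> \<in> Partitions n k" and IPe: "IP n X k = (1 / real n) * cst X \<Gamma>"
    using IP_attained[OF k(1,3)] by blast
  have part: "partition_on {..<n} \<Gamma>" and cardG: "card \<Gamma> = k" using G by (auto simp: Partitions_def)
  note pf = part_finite[OF part]
  define blk where "blk i = (THE S. S \<in> \<Gamma> \<and> i \<in> S)" for i
  have blk_eq: "blk i = S" if "S \<in> \<Gamma>" "i \<in> S" for i S
    unfolding blk_def by (rule the_equality) (use that part_unique[OF part] in blast)+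
  have blk_in: "blk i \<in> \<Gamma>" if "i < n" for i
  proof -
    from that obtain S where "S \<in> \<Gamma>" "i \<in> S" using partition_onD1[OF part] by auto
    then show ?thesis using blk_eq by auto
  qed
  define f where "f a = (norm (X a - centroid X (blk a)))\<^sup>2" for a
  have s0: "0 < s" using k by simp
  have rng: "i j < n" if "i \<in> A" "j < s" for i j using sub that by (auto simp: samples_wr_def PiE_iff)
  have pt: "IP s (X \<circ> i) k \<le> (1 / real s) * (\<Sum>j<s. f (i j))" if i: "i \<in> A" for i
  proof -
    have "(blk \<circ> i) ` {..<s} \<subseteq> \<Gamma>" using blk_in rng[OF i] by auto
    then have "card ((blk \<circ> i) ` {..<s}) \<le> k" using card_mono[OF pf(1)] cardG by metis
    from IP_le_label[OF this k(2), of "X \<circ> i" "centroid X"]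
    show ?thesis by (simp add: f_def)
  qed
  have "measure_pmf.expectation (pmf_of_set A) (\<lambda>i. IP s (X \<circ> i) k)
      \<le> measure_pmf.expectation (pmf_of_set A) (\<lambda>i. (1 / real s) * (\<Sum>j<s. f (i j)))"
    unfolding integral_pmf_of_set[OF ne fin]
    by (intro divide_right_mono sum_mono pt) (use cA in auto)
  also have "\<dots> = (\<Sum>a<n. f a) / real n" by (rule expect_avg[OF fin ne sub cl s0])
  also have "\<dots> = IP n X k"
  proof -
    have "(\<Sum>a<n. f a) = (\<Sum>S\<in>\<Gamma>. \<Sum>a\<in>S. f a)"
      using sum.Union_disjoint[of \<Gamma> f] partition_onD1[OF part] partition_onD2[OF part] pf(2)
      by (simp add: disjoint_def disjnt_def)
    also have "\<dots> = cst X \<Gamma>" unfolding cst_def f_def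
      by (intro sum.cong refl) (simp add: blk_eq)
    finally show ?thesis using IPe by simp
  qed
  finally show "measure_pmf.expectation (pmf_of_set A) (\<lambda>i. IP s (X \<circ> i) k) \<le> IP n X k" .
qed

theorem lemma3:
  fixes X :: "nat \<Rightarrow> 'a::euclidean_space" and n k s :: nat
  assumes "k \<ge> 2" and "s \<ge> k" and "n \<ge> k"
  shows "(measure_pmf.expectation (pmf_of_set (samples_wr n s)) (\<lambda>i. SDP s (X \<circ> i) k)
            \<le> measure_pmf.expectation (pmf_of_set (samples_wr n s)) (\<lambda>i. IP s (X \<circ> i) k)
          \<and> measure_pmf.expectation (pmf_of_set (samples_wr n s)) (\<lambda>i. IP s (X \<circ> i) k)
            \<le> IP n X k)
       \<and> (s \<le> n \<longrightarrow>
          measure_pmf.expectation (pmf_of_set (samples_wor n s)) (\<lambda>i. SDP s (X \<circ> i) k)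
            \<le> measure_pmf.expectation (pmf_of_set (samples_wor n s)) (\<lambda>i. IP s (X \<circ> i) k)
          \<and> measure_pmf.expectation (pmf_of_set (samples_wor n s)) (\<lambda>i. IP s (X \<circ> i) k)
            \<le> IP n X k)"
proof
  have k1: "1 \<le> k" using assms by simp
  have finwr: "finite (samples_wr n s)" unfolding samples_wr_def by (rule finite_PiE) auto
  have n0: "0 < n" using assms by simp
  have mem: "(\<lambda>x. if x < s then 0 else undefined) \<in> samples_wr n s"
    using n0 by (auto simp: samples_wr_def PiE_iff extensional_def)
  show "measure_pmf.expectation (pmf_of_set (samples_wr n s)) (\<lambda>i. SDP s (X \<circ> i) k)
            \<le> measure_pmf.expectation (pmf_of_set (samples_wr n s)) (\<lambda>i. IP s (X \<circ> i) k)
          \<and> measure_pmf.expectation (pmf_of_set (samples_wr n s)) (\<lambda>i. IP s (X \<circ> i) k)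
            \<le> IP n X k"
    by (rule main_generic[OF finwr _ order_refl Tsw_wr k1 assms(2,3)]) (use mem in auto)
  show "s \<le> n \<longrightarrow>
          measure_pmf.expectation (pmf_of_set (samples_wor n s)) (\<lambda>i. SDP s (X \<circ> i) k)
            \<le> measure_pmf.expectation (pmf_of_set (samples_wor n s)) (\<lambda>i. IP s (X \<circ> i) k)
          \<and> measure_pmf.expectation (pmf_of_set (samples_wor n s)) (\<lambda>i. IP s (X \<circ> i) k)
            \<le> IP n X k"
  proof
    assume sn: "s \<le> n"
    have sub: "samples_wor n s \<subseteq> samples_wr n s" by (auto simp: samples_wor_def)
    have fin: "finite (samples_wor n s)" using finite_subset[OF sub finwr] .
    have "(\<lambda>x. if x < s then x else undefined) \<in> samples_wor n s"
      using sn by (auto simp: samples_wor_def samples_wr_def PiE_iff extensional_def inj_on_def)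
    then have ne: "samples_wor n s \<noteq> {}" by auto
    show "measure_pmf.expectation (pmf_of_set (samples_wor n s)) (\<lambda>i. SDP s (X \<circ> i) k)
            \<le> measure_pmf.expectation (pmf_of_set (samples_wor n s)) (\<lambda>i. IP s (X \<circ> i) k)
          \<and> measure_pmf.expectation (pmf_of_set (samples_wor n s)) (\<lambda>i. IP s (X \<circ> i) k)
            \<le> IP n X k"
      by (rule main_generic[OF fin ne sub Tsw_wor k1 assms(2,3)])
  qed
qed


end
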